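(* Let $G$ be a free abelian group with a basis $E$, let $e\in E$, let $\check G$ be the subgroup generated by $E\setminus\{e\}$, and let $\lambda$ be the shift on $(G,e)^{\otimes\mathbb{Z}}$. Then (i) $\ker(\mathrm{id}-\lambda)=\mathbb{Z}e^{\otimes\mathbb{Z}}$; (ii) $(G,e)^{\otimes\mathbb{Z}}=(\mathrm{id}-\lambda)\big((G,e)^{\otimes\mathbb{Z}}\big)\oplus H(G,e)$ (internal direct sum). In particular, $H(G,e)$ is isomorphic to the cokernel of $\mathrm{id}-\lambda$.
   Context: $(G,e)^{\otimes\mathbb{Z}}$ is the inductive limit of $G\to G^{\otimes3}\to G^{\otimes5}\to\cdots$ (tensor products over $\mathbb{Z}$) with connecting maps $x\mapsto e\otimes x\otimes e$; equivalently it is the span of formal tensors $\bigotimes_{i\in\mathbb{Z}}x_i$ with $x_i\in G$ and $x_i=e$ for all but finitely many $i$. $e^{\otimes\mathbb{Z}}=\bigotimes_{i\in\mathbb{Z}}e$. The shift $\lambda$ is the automorphism with $\lambda(\bigotimes_i x_i)=\bigotimes_i x_{i-1}$. $\check G\otimes G^{\otimes\mathbb{N}}$ denotes the span of those $\bigotimes_i x_i$ with $x_0\in\check G$ and $x_i=e$ for all $i<0$, and $H(G,e):=\mathbb{Z}e^{\otimes\mathbb{Z}}+\check G\otimes G^{\otimes\mathbb{N}}$. *)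

theory Defs
  imports Main
begin

definition zspan :: "('a \<Rightarrow> int) set \<Rightarrow> ('a \<Rightarrow> int) set" where
  "zspan S = {f. \<exists>A c. finite A \<and> A \<subseteq> S \<and> f = (\<lambda>x. \<Sum>s\<in>A. c s * s x)}"

definition delta :: "'a \<Rightarrow> 'a \<Rightarrow> int" where
  "delta a = (\<lambda>b. if b = a then 1 else 0)"

text \<open>The free abelian group G with basis E = UNIV :: 'e set, as finitely supported functions.\<close>
definition Gfree :: "('e \<Rightarrow> int) set" where
  "Gfree = zspan (range delta)"

definition Gcheck :: "'e \<Rightarrow> ('e \<Rightarrow> int) set" where
  "Gcheck e = zspan (delta ` (UNIV - {e}))"

text \<open>Index sequences: basis elements of the restricted tensor product (all but finitely many entries e).\<close>
definition seqs :: "'e \<Rightarrow> (int \<Rightarrow> 'e) set" where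
  "seqs e = {w. finite {i. w i \<noteq> e}}"

definition adm :: "'e \<Rightarrow> (int \<Rightarrow> ('e \<Rightarrow> int)) \<Rightarrow> bool" where
  "adm e x \<longleftrightarrow> (\<forall>i. x i \<in> Gfree) \<and> finite {i. x i \<noteq> delta e}"

text \<open>The formal tensor of a family x, expanded multilinearly in the basis of (G,e)^(tensor Z).\<close>
definition tens :: "'e \<Rightarrow> (int \<Rightarrow> ('e \<Rightarrow> int)) \<Rightarrow> (int \<Rightarrow> 'e) \<Rightarrow> int" where
  "tens e x = (\<lambda>w. if w \<in> seqs e
       then (\<Prod>i\<in>{i. w i \<noteq> e \<or> x i \<noteq> delta e}. x i (w i)) else 0)"

definition TZ :: "'e \<Rightarrow> ((int \<Rightarrow> 'e) \<Rightarrow> int) set" where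
  "TZ e = zspan {tens e x | x. adm e x}"

definition etens :: "'e \<Rightarrow> (int \<Rightarrow> 'e) \<Rightarrow> int" where
  "etens e = tens e (\<lambda>i. delta e)"

text \<open>The shift: lambda(tensor_i x_i) = tensor_i x_(i-1); on coefficients (lambda c)(w) = c(i |-> w(i+1)).\<close>
definition shift :: "((int \<Rightarrow> 'e) \<Rightarrow> int) \<Rightarrow> ((int \<Rightarrow> 'e) \<Rightarrow> int)" where
  "shift c = (\<lambda>w. c (\<lambda>i. w (i + 1)))"

definition GcheckN :: "'e \<Rightarrow> ((int \<Rightarrow> 'e) \<Rightarrow> int) set" where
  "GcheckN e = zspan {tens e x | x. adm e x \<and> x 0 \<in> Gcheck e \<and> (\<forall>i<0. x i = delta e)}"

definition Hset :: "'e \<Rightarrow> ((int \<Rightarrow> 'e) \<Rightarrow> int) set" where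
  "Hset e = {(\<lambda>w. k * etens e w + h w) | k h. h \<in> GcheckN e}"

end

theory Submission
  imports Defs "HOL-Library.FuncSet"
begin

lemma zspan_zero: "(\<lambda>x. 0) \<in> zspan S"
  unfolding zspan_def by (rule CollectI, rule exI[of _ "{}"], auto)

lemma zspan_gen: "s \<in> S \<Longrightarrow> s \<in> zspan S"
  unfolding zspan_def by (rule CollectI, rule exI[of _ "{s}"], rule exI[of _ "\<lambda>_. 1"], auto)

lemma zspan_smult: assumes "f \<in> zspan S" shows "(\<lambda>x. k * f x) \<in> zspan S"
proof -
  from assms obtain A c where A: "finite A" "A \<subseteq> S" "f = (\<lambda>x. \<Sum>s\<in>A. c s * s x)"
    unfolding zspan_def by blast
  show ?thesis unfolding zspan_def
    by (rule CollectI, rule exI[of _ A], rule exI[of _ "\<lambda>s. k * c s"])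
       (simp add: A sum_distrib_left mult.assoc)
qed

lemma zspan_add: assumes "f \<in> zspan S" "g \<in> zspan S" shows "(\<lambda>x. f x + g x) \<in> zspan S"
proof -
  from assms(1) obtain A c where A: "finite A" "A \<subseteq> S" "f = (\<lambda>x. \<Sum>s\<in>A. c s * s x)"
    unfolding zspan_def by blast
  from assms(2) obtain B d where B: "finite B" "B \<subseteq> S" "g = (\<lambda>x. \<Sum>s\<in>B. d s * s x)"
    unfolding zspan_def by blast
  define c' where "c' s = (if s \<in> A then c s else 0) + (if s \<in> B then d s else 0)" for s
  have "(\<lambda>x. f x + g x) = (\<lambda>x. \<Sum>s\<in>A \<union> B. c' s * s x)"
  proof
    fix x
    have "(\<Sum>s\<in>A \<union> B. c' s * s x) = (\<Sum>s\<in>A \<union> B. (if s \<in> A then c s * s x else 0))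
          + (\<Sum>s\<in>A \<union> B. (if s \<in> B then d s * s x else 0))"
      unfolding c'_def sum.distrib[symmetric] by (rule sum.cong) (auto simp: distrib_right)
    also have "\<dots> = f x + g x"
      using A B by (simp only: sum.inter_restrict[symmetric] finite_UnI) (simp add: Int_absorb1 Int_absorb2 Un_Int_eq)
    finally show "f x + g x = (\<Sum>s\<in>A \<union> B. c' s * s x)" by simp
  qed
  then show ?thesis unfolding zspan_def using A B by blast
qed

lemma zspan_induct:
  assumes "f \<in> zspan S" "P (\<lambda>x. 0)"
    "\<And>s k g. s \<in> S \<Longrightarrow> P g \<Longrightarrow> P (\<lambda>x. k * s x + g x)"
  shows "P f"
proof -
  from assms(1) obtain A c where A: "finite A" "A \<subseteq> S" "f = (\<lambda>x. \<Sum>s\<in>A. c s * s x)"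
    unfolding zspan_def by blast
  have "A \<subseteq> S \<longrightarrow> P (\<lambda>x. \<Sum>s\<in>A. c s * s x)" using A(1)
  proof (induction A rule: finite_induct)
    case empty then show ?case using assms(2) by simp
  next
    case (insert a A)
    then show ?case using assms(3)[of a "\<lambda>x. \<Sum>s\<in>A. c s * s x" "c a"] by simp
  qed
  then show ?thesis using A by simp
qed

lemma zspan_mono: "S \<subseteq> T \<Longrightarrow> zspan S \<subseteq> zspan T"
  unfolding zspan_def by blast

lemma zspan_sum:
  assumes "finite B" "\<And>b. b \<in> B \<Longrightarrow> g b \<in> zspan S"
  shows "(\<lambda>x. \<Sum>b\<in>B. k b * g b x) \<in> zspan S"
  using assms
proof (induction B rule: finite_induct)
  case empty then show ?case by (simp add: zspan_zero)
next
  case (insert a B)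
  have "(\<lambda>x. k a * g a x + (\<Sum>b\<in>B. k b * g b x)) \<in> zspan S"
    using insert by (intro zspan_add zspan_smult) auto
  then show ?case using insert by simp
qed


section \<open>Finitely supported functions\<close>

definition FS :: "'e \<Rightarrow> ((int \<Rightarrow> 'e) \<Rightarrow> int) set" where
  "FS e = {c. finite {w. c w \<noteq> 0} \<and> (\<forall>w. c w \<noteq> 0 \<longrightarrow> w \<in> seqs e)}"

lemma FS_zero: "(\<lambda>x. 0) \<in> FS e" unfolding FS_def by simp

lemma FS_add: assumes "f \<in> FS e" "g \<in> FS e" shows "(\<lambda>x. f x + g x) \<in> FS e"
proof -
  have "{w. f w + g w \<noteq> 0} \<subseteq> {w. f w \<noteq> 0} \<union> {w. g w \<noteq> 0}" by auto
  moreover have "finite ({w. f w \<noteq> 0} \<union> {w. g w \<noteq> 0})" using assms by (simp add: FS_def)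
  ultimately have "finite {w. f w + g w \<noteq> 0}" by (rule finite_subset)
  moreover have "\<forall>w. f w + g w \<noteq> 0 \<longrightarrow> w \<in> seqs e"
  proof (intro allI impI)
    fix w assume "f w + g w \<noteq> 0"
    then have "f w \<noteq> 0 \<or> g w \<noteq> 0" by auto
    then show "w \<in> seqs e" using assms unfolding FS_def by blast
  qed
  ultimately show ?thesis unfolding FS_def by simp
qed

lemma FS_smult: assumes "f \<in> FS e" shows "(\<lambda>x. k * f x) \<in> FS e"
proof -
  have "{w. k * f w \<noteq> 0} \<subseteq> {w. f w \<noteq> 0}" by auto
  moreover have "finite {w. f w \<noteq> 0}" using assms by (simp add: FS_def)
  ultimately have "finite {w. k * f w \<noteq> 0}" by (rule finite_subset)
  moreover have "\<forall>w. k * f w \<noteq> 0 \<longrightarrow> w \<in> seqs e" using assms unfolding FS_def by simp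
  ultimately show ?thesis unfolding FS_def by simp
qed

lemma FS_diff: assumes "f \<in> FS e" "g \<in> FS e" shows "(\<lambda>x. f x - g x) \<in> FS e"
  using FS_add[OF assms(1) FS_smult[OF assms(2), of "-1"]] by simp

lemma zspan_FS: assumes S: "S \<subseteq> FS e" shows "zspan S \<subseteq> FS e"
proof
  fix f assume f: "f \<in> zspan S"
  show "f \<in> FS e"
  proof (rule zspan_induct[OF f])
    show "(\<lambda>x. 0) \<in> FS e" by (rule FS_zero)
  next
    fix s k g assume "s \<in> S" "g \<in> FS e"
    then show "(\<lambda>x. k * s x + g x) \<in> FS e" using S by (intro FS_add FS_smult) auto
  qed
qed

definition finsupp :: "('a \<Rightarrow> int) set" where
  "finsupp = {f. finite {x. f x \<noteq> 0}}"

lemma zspan_finsupp: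
  fixes f :: "'a \<Rightarrow> int"
  assumes S: "S \<subseteq> finsupp" and f: "f \<in> zspan S"
  shows "f \<in> finsupp"
proof -
  show "f \<in> finsupp"
  proof (rule zspan_induct[OF f])
    show "(\<lambda>x. 0) \<in> finsupp" unfolding finsupp_def by simp
  next
    fix s :: "'a \<Rightarrow> int" and k and g :: "'a \<Rightarrow> int" assume "s \<in> S" "g \<in> finsupp"
    then have "finite {x. s x \<noteq> 0}" "finite {x. g x \<noteq> 0}" using S unfolding finsupp_def by auto
    moreover have "{x. k * s x + g x \<noteq> 0} \<subseteq> {x. s x \<noteq> 0} \<union> {x. g x \<noteq> 0}" by auto
    ultimately show "(\<lambda>x. k * s x + g x) \<in> finsupp" unfolding finsupp_def by (auto intro: finite_subset)
  qed
qed

lemma delta_finsupp: "delta a \<in> finsupp"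
proof -
  have "{x. delta a x \<noteq> 0} = {a}" by (auto simp: delta_def)
  then show ?thesis unfolding finsupp_def by simp
qed

lemma Gfree_finsupp: assumes "f \<in> Gfree" shows "finite {x. f x \<noteq> 0}"
proof -
  have "range delta \<subseteq> finsupp" using delta_finsupp by auto
  from zspan_finsupp[OF this, of f] assms show ?thesis unfolding Gfree_def finsupp_def by simp
qed

lemma delta_Gfree: "delta a \<in> Gfree"
  unfolding Gfree_def by (rule zspan_gen) simp

lemma delta_inj: "delta a = delta b \<longleftrightarrow> a = b"
  by (metis delta_def zero_neq_one)

lemma Gcheck_e: "f \<in> Gcheck e \<Longrightarrow> f e = 0"
  unfolding Gcheck_def
  by (erule zspan_induct) (auto simp: delta_def)

lemma tens_delta: "w \<in> seqs e \<Longrightarrow> tens e (\<lambda>i. delta (w i)) = delta w"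
proof
  fix v assume w: "w \<in> seqs e"
  show "tens e (\<lambda>i. delta (w i)) v = delta w v"
  proof (cases "v \<in> seqs e")
    case False then show ?thesis using w by (auto simp: tens_def delta_def)
  next
    case True
    let ?I = "{i. v i \<noteq> e \<or> delta (w i) \<noteq> delta e}"
    have I: "?I = {i. v i \<noteq> e} \<union> {i. w i \<noteq> e}" by (auto simp: delta_inj)
    have fin: "finite ?I" unfolding I using True w by (simp add: seqs_def)
    have iff: "(\<forall>i\<in>?I. v i = w i) \<longleftrightarrow> v = w"
    proof
      assume a: "\<forall>i\<in>?I. v i = w i"
      show "v = w"
      proof
        fix i show "v i = w i"
        proof (cases "i \<in> ?I")
          case True then show ?thesis using a by blast
        next
          case False then have "v i = e" "w i = e" using I by blast+
          then show ?thesis by simp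
        qed
      qed
    qed simp
    have "(\<Prod>i\<in>?I. delta (w i) (v i)) = (\<Prod>i\<in>?I. if v i = w i then 1 else 0)"
      by (rule prod.cong) (simp_all add: delta_def)
    also have "\<dots> = (if \<forall>i\<in>?I. v i = w i then 1 else 0)"
      using fin by (induction rule: finite_induct) simp_all
    also have "(if \<forall>i\<in>?I. v i = w i then 1 else 0) = delta w v" by (simp only: iff) (simp add: delta_def)
    finally show ?thesis using True by (simp add: tens_def)
  qed
qed

lemma tens_FS: assumes "adm e x" shows "tens e x \<in> FS e"
proof -
  let ?S = "{i. x i \<noteq> delta e}"
  have finS: "finite ?S" using assms by (simp add: adm_def)
  have finx: "finite {a. x i a \<noteq> 0}" for i using assms Gfree_finsupp unfolding adm_def by blast
  let ?W = "{w. \<forall>i. (i \<in> ?S \<longrightarrow> x i (w i) \<noteq> 0) \<and> (i \<notin> ?S \<longrightarrow> w i = e)}"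
  have sub: "{w. tens e x w \<noteq> 0} \<subseteq> ?W"
  proof
    fix w assume "w \<in> {w. tens e x w \<noteq> 0}"
    then have ws: "w \<in> seqs e" and p: "(\<Prod>i\<in>{i. w i \<noteq> e \<or> x i \<noteq> delta e}. x i (w i)) \<noteq> 0"
      by (auto simp: tens_def split: if_splits)
    have "finite {i. w i \<noteq> e \<or> x i \<noteq> delta e}"
      using ws finS unfolding seqs_def by (simp only: Collect_disj_eq finite_Un) simp
    then have nz: "\<And>i. w i \<noteq> e \<or> x i \<noteq> delta e \<Longrightarrow> x i (w i) \<noteq> 0"
      using p by (auto simp: prod_zero_iff)
    show "w \<in> ?W"
    proof (intro CollectI allI conjI impI)
      fix i assume "i \<in> ?S" then show "x i (w i) \<noteq> 0" using nz by auto
    next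
      fix i assume "i \<notin> ?S"
      then have "x i = delta e" by simp
      then show "w i = e" using nz[of i] by (auto simp: delta_def split: if_splits)
    qed
  qed
  have "?W \<subseteq> (\<lambda>f i. if i \<in> ?S then f i else e) ` (PiE ?S (\<lambda>i. {a. x i a \<noteq> 0}))"
  proof
    fix w assume w: "w \<in> ?W"
    have "w = (\<lambda>i. if i \<in> ?S then restrict w ?S i else e)" using w by auto
    moreover have "restrict w ?S \<in> PiE ?S (\<lambda>i. {a. x i a \<noteq> 0})" using w by auto
    ultimately show "w \<in> (\<lambda>f i. if i \<in> ?S then f i else e) ` (PiE ?S (\<lambda>i. {a. x i a \<noteq> 0}))"
      by blast
  qed
  moreover have "finite (PiE ?S (\<lambda>i. {a. x i a \<noteq> 0}))" using finS finx by (intro finite_PiE) auto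
  ultimately have "finite ?W" by (meson finite_imageI finite_subset)
  then have "finite {w. tens e x w \<noteq> 0}" using sub finite_subset by blast
  then show ?thesis unfolding FS_def by (auto simp: tens_def split: if_splits)
qed

lemma delta_seqs_adm: "w \<in> seqs e \<Longrightarrow> adm e (\<lambda>i. delta (w i))"
  unfolding adm_def seqs_def by (simp add: delta_inj delta_Gfree)

lemma FS_sum: assumes "c \<in> FS e" shows "c = (\<lambda>x. \<Sum>w\<in>{w. c w \<noteq> 0}. c w * delta w x)"
proof
  fix x
  have fin: "finite {w. c w \<noteq> 0}" using assms by (simp add: FS_def)
  have "(\<Sum>w\<in>{w. c w \<noteq> 0}. c w * delta w x) = (\<Sum>w\<in>{w. c w \<noteq> 0}. if x = w then c w else 0)"
    by (rule sum.cong) (auto simp: delta_def)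
  also have "\<dots> = c x" using fin by (simp add: sum.delta)
  finally show "c x = (\<Sum>w\<in>{w. c w \<noteq> 0}. c w * delta w x)" by simp
qed

lemma FS_zspan_delta: assumes "c \<in> FS e" shows "c \<in> zspan (delta ` seqs e)"
proof -
  have "(\<lambda>x. \<Sum>w\<in>{w. c w \<noteq> 0}. c w * delta w x) \<in> zspan (delta ` seqs e)"
    using assms by (intro zspan_sum zspan_gen) (auto simp: FS_def)
  then show ?thesis using FS_sum[OF assms] by simp
qed

lemma TZ_FS: "TZ e = FS e"
proof
  have "{tens e x | x. adm e x} \<subseteq> FS e"
  proof
    fix f assume "f \<in> {tens e x | x. adm e x}"
    then obtain x where "f = tens e x" "adm e x" by blast
    then show "f \<in> FS e" using tens_FS by simp
  qed
  then show "TZ e \<subseteq> FS e" unfolding TZ_def by (rule zspan_FS)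
next
  have "delta ` seqs e \<subseteq> {tens e x | x. adm e x}"
  proof
    fix f assume "f \<in> delta ` seqs e"
    then obtain w where w: "w \<in> seqs e" "f = delta w" by blast
    then have "f = tens e (\<lambda>i. delta (w i))" "adm e (\<lambda>i. delta (w i))"
      using tens_delta[OF w(1)] delta_seqs_adm[OF w(1)] by auto
    then show "f \<in> {tens e x | x. adm e x}" by blast
  qed
  then have "zspan (delta ` seqs e) \<subseteq> TZ e" unfolding TZ_def by (rule zspan_mono)
  then show "FS e \<subseteq> TZ e" using FS_zspan_delta by (meson subsetD subsetI)
qed


section \<open>Shifts and normal forms\<close>

definition sh :: "int \<Rightarrow> (int \<Rightarrow> 'e) \<Rightarrow> (int \<Rightarrow> 'e)" where
  "sh n w = (\<lambda>i. w (i + n))"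

definition nrm :: "'e \<Rightarrow> (int \<Rightarrow> 'e) \<Rightarrow> bool" where
  "nrm e u \<longleftrightarrow> u \<in> seqs e \<and> u 0 \<noteq> e \<and> (\<forall>i<0. u i = e)"

definition DD :: "((int \<Rightarrow> 'e) \<Rightarrow> int) \<Rightarrow> ((int \<Rightarrow> 'e) \<Rightarrow> int)" where
  "DD c = (\<lambda>w. c w - shift c w)"

lemma sh_sh: "sh a (sh b w) = sh (a + b) w"
  by (simp add: sh_def ac_simps)

lemma sh_0: "sh 0 w = w" by (simp add: sh_def)

lemma shift_sh: "shift c w = c (sh 1 w)" by (simp add: shift_def sh_def)

lemma sh_inv: "sh (-n) (sh n w) = w" by (simp add: sh_sh sh_0)

lemma sh_inj: "inj (sh n)"
  by (metis injI sh_inv)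

lemma sh_seqs: assumes "w \<in> seqs e" shows "sh n w \<in> seqs e"
proof -
  have "{i. sh n w i \<noteq> e} = (\<lambda>j. j - n) ` {j. w j \<noteq> e}"
    by (auto simp: sh_def image_iff intro!: exI[of _ "_ + n"])
  then show ?thesis using assms by (simp add: seqs_def)
qed

lemma sh_seqs_iff: "sh n w \<in> seqs e \<longleftrightarrow> w \<in> seqs e"
  by (metis sh_inv sh_seqs)

lemma sh_const: "sh n (\<lambda>_. a) = (\<lambda>_. a)" by (simp add: sh_def)

lemma sh_eq_const: "sh n w = (\<lambda>_. a) \<longleftrightarrow> w = (\<lambda>_. a)"
  by (metis sh_const sh_inv)

lemma const_seqs: "(\<lambda>_. e) \<in> seqs e" by (simp add: seqs_def)

lemma nrm_decomp:
  assumes "w \<in> seqs e" "w \<noteq> (\<lambda>_. e)"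
  shows "\<exists>u n. nrm e u \<and> w = sh n u"
proof -
  let ?M = "{i. w i \<noteq> e}"
  have fin: "finite ?M" using assms by (simp add: seqs_def)
  have ne: "?M \<noteq> {}" using assms(2) by auto
  define m where "m = Min ?M"
  have m1: "w m \<noteq> e" using Min_in[OF fin ne] by (simp add: m_def)
  have m2: "i < m \<Longrightarrow> w i = e" for i using Min_le[OF fin, of i] by (force simp: m_def)
  have "nrm e (sh m w)"
    unfolding nrm_def using m1 m2 sh_seqs[OF assms(1)] by (auto simp: sh_def)
  moreover have "w = sh (-m) (sh m w)" by (simp add: sh_sh sh_0)
  ultimately show ?thesis by blast
qed

lemma nrm_sh: assumes "nrm e u" "nrm e (sh n u)" shows "n = 0"
proof (rule ccontr)
  assume "n \<noteq> 0"
  then consider "n > 0" | "n < 0" by linarith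
  then show False
  proof cases
    case 1
    then have "sh n u (-n) = e" using assms(2) unfolding nrm_def by simp
    then show False using assms(1) by (simp add: sh_def nrm_def)
  next
    case 2
    then have "sh n u 0 = e" using assms(1) unfolding nrm_def by (simp add: sh_def)
    then show False using assms(2) by (simp add: nrm_def)
  qed
qed

lemma nrm_inj: assumes "nrm e u" shows "inj (\<lambda>n. sh n u)"
proof (rule injI)
  fix a b assume eq: "sh a u = sh b u"
  have "sh (-a) (sh a u) = sh (-a) (sh b u)" using eq by simp
  then have "u = sh (b - a) u" by (simp add: sh_sh sh_0)
  then have "nrm e (sh (b - a) u)" using assms by simp
  from nrm_sh[OF assms this] show "a = b" by simp
qed

lemma nrm_not_const: "nrm e u \<Longrightarrow> sh n u \<noteq> (\<lambda>_. e)"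
  by (metis nrm_def sh_eq_const)

lemma int_up:
  fixes f :: "int \<Rightarrow> int"
  assumes fin: "finite {n. f n \<noteq> 0}" and st: "\<And>n. n \<ge> a \<Longrightarrow> f n = f (n + 1)"
  shows "n \<ge> a \<Longrightarrow> f n = 0"
proof -
  have c: "f n = f a" if "n \<ge> a" for n
    using that
  proof (induction n rule: int_ge_induct)
    case base then show ?case by simp
  next
    case (step i) then show ?case using st[of i] by simp
  qed
  show "n \<ge> a \<Longrightarrow> f n = 0"
  proof (rule ccontr)
    assume "n \<ge> a" "f n \<noteq> 0"
    then have fa: "f a \<noteq> 0" using c by metis
    have "{a..} \<subseteq> {n. f n \<noteq> 0}"
    proof
      fix m assume "m \<in> {a..}" then show "m \<in> {n. f n \<noteq> 0}" using c[of m] fa by simp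
    qed
    then have "finite {a..}" using fin finite_subset by blast
    then show False using infinite_Ici[of a] by simp
  qed
qed

lemma int_down:
  fixes f :: "int \<Rightarrow> int"
  assumes fin: "finite {n. f n \<noteq> 0}" and st: "\<And>n. n \<le> a \<Longrightarrow> f (n - 1) = f n"
  shows "n \<le> a \<Longrightarrow> f n = 0"
proof -
  let ?g = "\<lambda>n. f (- n)"
  have "{n. ?g n \<noteq> 0} = uminus ` {n. f n \<noteq> 0}" by (auto simp: image_iff intro!: exI[of _ "- _"])
  then have fg: "finite {n. ?g n \<noteq> 0}" using fin by simp
  have "?g n = ?g (n + 1)" if "n \<ge> -a" for n using st[of "-n"] that by simp
  from int_up[of ?g "-a", OF fg this] show "n \<le> a \<Longrightarrow> f n = 0" by (metis minus_minus neg_le_iff_le)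
qed

lemma shift_FS: assumes "c \<in> FS e" shows "shift c \<in> FS e"
proof -
  have eq: "{w. shift c w \<noteq> 0} = sh 1 -` {v. c v \<noteq> 0}" by (auto simp: shift_sh)
  have "finite (sh 1 -` {v. c v \<noteq> 0})"
    by (rule finite_vimageI[OF _ sh_inj]) (use assms in \<open>simp add: FS_def\<close>)
  then have "finite {w. shift c w \<noteq> 0}" by (simp only: eq)
  moreover have "shift c w \<noteq> 0 \<Longrightarrow> w \<in> seqs e" for w
    using assms by (auto simp: FS_def shift_sh sh_seqs_iff)
  ultimately show ?thesis by (simp add: FS_def)
qed

lemma DD_FS: assumes "c \<in> FS e" shows "DD c \<in> FS e"
  unfolding DD_def by (rule FS_diff[OF assms shift_FS[OF assms]])

lemma etens_delta: "etens e = delta (\<lambda>_. e)"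
  using tens_delta[OF const_seqs, of e] by (simp add: etens_def)

lemma etens_FS: "etens e \<in> FS e"
  unfolding etens_def by (rule tens_FS) (simp add: adm_def delta_Gfree)

lemma finite_orbit:
  assumes "c \<in> FS e" "nrm e u"
  shows "finite {n. c (sh n u) \<noteq> 0}"
proof -
  have eq: "{n. c (sh n u) \<noteq> 0} = (\<lambda>n. sh n u) -` {v. c v \<noteq> 0}" by auto
  have "finite ((\<lambda>n. sh n u) -` {v. c v \<noteq> 0})"
    by (rule finite_vimageI[OF _ nrm_inj[OF assms(2)]]) (use assms in \<open>simp add: FS_def\<close>)
  then show ?thesis by (simp only: eq)
qed


section \<open>Kernel\<close>

lemma ker_char:
  assumes c: "c \<in> FS e" and k: "\<forall>w. c w - shift c w = 0"
  shows "c = (\<lambda>w. c (\<lambda>_. e) * etens e w)"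
proof -
  have z: "c w = 0" if ne: "w \<noteq> (\<lambda>_. e)" for w
  proof (cases "w \<in> seqs e")
    case False then show ?thesis using c by (auto simp: FS_def)
  next
    case True
    then obtain u n where u: "nrm e u" and w: "w = sh n u" using nrm_decomp[OF True ne] by blast
    let ?f = "\<lambda>j. c (sh j u)"
    have st: "?f j = ?f (j + 1)" for j
      using k[rule_format, of "sh j u"] by (simp add: shift_sh sh_sh add.commute)
    have fin: "finite {j. ?f j \<noteq> 0}" using finite_orbit[OF c u] .
    have "?f n = 0"
    proof (cases "n \<ge> 0")
      case True from int_up[of ?f 0, OF fin st] True show ?thesis by simp
    next
      case False
      have "?f (j - 1) = ?f j" if "j \<le> 0" for j using st[of "j - 1"] by simp
      from int_down[of ?f 0, OF fin this] False show ?thesis by simp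
    qed
    then show ?thesis using w by simp
  qed
  show ?thesis
  proof
    fix w show "c w = c (\<lambda>_. e) * etens e w"
      using z[of w] by (cases "w = (\<lambda>_. e)") (auto simp: etens_delta delta_def)
  qed
qed

section \<open>The complement H\<close>

lemma tens_nz:
  assumes "adm e x" "tens e x w \<noteq> 0"
  shows "w \<in> seqs e \<and> (\<forall>i. (w i \<noteq> e \<or> x i \<noteq> delta e) \<longrightarrow> x i (w i) \<noteq> 0)"
proof -
  have finS: "finite {i. x i \<noteq> delta e}" using assms by (simp add: adm_def)
  from assms(2) have ws: "w \<in> seqs e" and p: "(\<Prod>i\<in>{i. w i \<noteq> e \<or> x i \<noteq> delta e}. x i (w i)) \<noteq> 0"
    by (auto simp: tens_def split: if_splits)
  have "finite {i. w i \<noteq> e \<or> x i \<noteq> delta e}"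
    using ws finS unfolding seqs_def by (simp only: Collect_disj_eq finite_Un) simp
  then show ?thesis using p ws by (auto simp: prod_zero_iff)
qed

lemma GcheckN_nrm:
  assumes "h \<in> GcheckN e"
  shows "h w \<noteq> 0 \<Longrightarrow> nrm e w"
proof -
  have "\<forall>w. h w \<noteq> 0 \<longrightarrow> nrm e w"
    using assms unfolding GcheckN_def
  proof (rule zspan_induct)
    show "\<forall>w. 0 \<noteq> 0 \<longrightarrow> nrm e w" by simp
  next
    fix s k and g :: "(int \<Rightarrow> 'a) \<Rightarrow> int"
    assume s: "s \<in> {tens e x |x. adm e x \<and> x 0 \<in> Gcheck e \<and> (\<forall>i<0. x i = delta e)}"
      and g: "\<forall>w. g w \<noteq> 0 \<longrightarrow> nrm e w"
    from s obtain x where x: "s = tens e x" "adm e x" "x 0 \<in> Gcheck e" "\<forall>i<0. x i = delta e" by blast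
    have "nrm e w" if "s w \<noteq> 0" for w
    proof -
      from tens_nz[OF x(2)] that x(1) have ws: "w \<in> seqs e"
        and nz: "\<And>i. w i \<noteq> e \<or> x i \<noteq> delta e \<Longrightarrow> x i (w i) \<noteq> 0" by auto
      have "w i = e" if "i < 0" for i
        using nz[of i] x(4) that by (auto simp: delta_def split: if_splits)
      moreover have "w 0 \<noteq> e"
      proof
        assume w0: "w 0 = e"
        have "x 0 e = 0" using Gcheck_e[OF x(3)] .
        then have "x 0 \<noteq> delta e" by (auto simp: delta_def dest: fun_cong[where x = e])
        then show False using nz[of 0] w0 \<open>x 0 e = 0\<close> by simp
      qed
      ultimately show ?thesis using ws by (simp add: nrm_def)
    qed
    then show "\<forall>w. k * s w + g w \<noteq> 0 \<longrightarrow> nrm e w"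
    proof (intro allI impI)
      fix w assume ns: "\<And>w. s w \<noteq> 0 \<Longrightarrow> nrm e w" and "k * s w + g w \<noteq> 0"
      then have "s w \<noteq> 0 \<or> g w \<noteq> 0" by auto
      then show "nrm e w" using ns g by blast
    qed
  qed
  then show "h w \<noteq> 0 \<Longrightarrow> nrm e w" by blast
qed

lemma part3:
  assumes d: "d \<in> FS e" and H: "DD d \<in> Hset e"
  shows "DD d = (\<lambda>w. 0)"
proof -
  from H obtain k h where kh: "DD d = (\<lambda>w. k * etens e w + h w)" "h \<in> GcheckN e"
    unfolding Hset_def by blast
  have hN: "DD d w = 0" if "\<not> nrm e w" for w
  proof (cases "w = (\<lambda>_. e)")
    case True then show ?thesis by (simp add: DD_def shift_sh sh_const)
  next
    case False
    then have "etens e w = 0" by (simp add: etens_delta delta_def)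
    moreover have "h w = 0" using GcheckN_nrm[OF kh(2)] that by blast
    ultimately show ?thesis using kh(1) by simp
  qed
  have nN: "DD d u = 0" if u: "nrm e u" for u
  proof -
    let ?f = "\<lambda>j. d (sh j u)"
    have fin: "finite {j. ?f j \<noteq> 0}" using finite_orbit[OF d u] .
    have D: "DD d (sh j u) = ?f j - ?f (j + 1)" for j
      by (simp add: DD_def shift_sh sh_sh add.commute)
    have st: "?f j = ?f (j + 1)" if "j \<noteq> 0" for j
    proof -
      have "\<not> nrm e (sh j u)" using nrm_sh[OF u] that by blast
      then show ?thesis using hN D[of j] by simp
    qed
    have f1: "?f 1 = 0" using int_up[of ?f 1, OF fin st] by simp
    have "?f (j - 1) = ?f j" if "j \<le> 0" for j using st[of "j - 1"] that by simp
    from int_down[of ?f 0, OF fin this] have f0: "?f 0 = 0" by simp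
    show ?thesis using D[of 0] f0 f1 by (simp add: sh_0)
  qed
  show ?thesis
  proof
    fix w show "DD d w = 0" using hN nN by blast
  qed
qed


section \<open>Decomposition\<close>

lemma GcheckN_FS: "GcheckN e \<subseteq> FS e"
proof -
  have "{tens e x | x. adm e x \<and> x 0 \<in> Gcheck e \<and> (\<forall>i<0. x i = delta e)} \<subseteq> {tens e x | x. adm e x}"
    by blast
  then have "GcheckN e \<subseteq> TZ e" unfolding GcheckN_def TZ_def by (rule zspan_mono)
  then show ?thesis by (simp add: TZ_FS)
qed

lemma Hset_FS: assumes "h \<in> Hset e" shows "h \<in> FS e"
proof -
  from assms obtain k g where kg: "h = (\<lambda>w. k * etens e w + g w)" "g \<in> GcheckN e"
    unfolding Hset_def by blast
  have "g \<in> FS e" by (rule subsetD[OF GcheckN_FS kg(2)])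
  then show ?thesis unfolding kg(1) by (intro FS_add FS_smult etens_FS)
qed

definition Rset :: "'e \<Rightarrow> ((int \<Rightarrow> 'e) \<Rightarrow> int) set" where
  "Rset e = {(\<lambda>w. DD d w + h w) | d h. d \<in> FS e \<and> h \<in> Hset e}"

lemma Hset_intro: "g \<in> GcheckN e \<Longrightarrow> (\<lambda>w. k * etens e w + g w) \<in> Hset e"
  unfolding Hset_def by blast

lemma Rset_intro: "d \<in> FS e \<Longrightarrow> h \<in> Hset e \<Longrightarrow> (\<lambda>w. DD d w + h w) \<in> Rset e"
  unfolding Rset_def by blast

lemma GcheckN_zero: "(\<lambda>w. 0) \<in> GcheckN e"
  unfolding GcheckN_def by (rule zspan_zero)

lemma Hset_zero: "(\<lambda>w. 0) \<in> Hset e"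
proof -
  have eq: "(\<lambda>w. 0) = (\<lambda>w. 0 * etens e w + (0::int))" by simp
  show ?thesis unfolding eq by (rule Hset_intro) (rule GcheckN_zero)
qed

lemma Hset_etens: "etens e \<in> Hset e"
proof -
  have eq: "etens e = (\<lambda>w. 1 * etens e w + (0::int))" by simp
  show ?thesis by (subst eq, rule Hset_intro) (rule GcheckN_zero)
qed

lemma Hset_add: assumes "f \<in> Hset e" "g \<in> Hset e" shows "(\<lambda>w. f w + g w) \<in> Hset e"
proof -
  from assms(1) obtain k1 h1 where 1: "f = (\<lambda>w. k1 * etens e w + h1 w)" "h1 \<in> GcheckN e"
    unfolding Hset_def by blast
  from assms(2) obtain k2 h2 where 2: "g = (\<lambda>w. k2 * etens e w + h2 w)" "h2 \<in> GcheckN e"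
    unfolding Hset_def by blast
  have eq: "(\<lambda>w. f w + g w) = (\<lambda>w. (k1 + k2) * etens e w + (h1 w + h2 w))"
    unfolding 1 2 by (simp add: algebra_simps)
  have m: "(\<lambda>w. h1 w + h2 w) \<in> GcheckN e"
    using 1(2) 2(2) unfolding GcheckN_def by (rule zspan_add)
  show ?thesis unfolding eq by (rule Hset_intro) (rule m)
qed

lemma Hset_smult: assumes "f \<in> Hset e" shows "(\<lambda>w. k * f w) \<in> Hset e"
proof -
  from assms(1) obtain k1 h1 where 1: "f = (\<lambda>w. k1 * etens e w + h1 w)" "h1 \<in> GcheckN e"
    unfolding Hset_def by blast
  have eq: "(\<lambda>w. k * f w) = (\<lambda>w. (k * k1) * etens e w + k * h1 w)"
    unfolding 1 by (simp add: algebra_simps)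
  have m: "(\<lambda>w. k * h1 w) \<in> GcheckN e"
    using 1(2) unfolding GcheckN_def by (rule zspan_smult)
  show ?thesis unfolding eq by (rule Hset_intro) (rule m)
qed

lemma nrm_delta_Hset: assumes u: "nrm e u" shows "delta u \<in> Hset e"
proof -
  have us: "u \<in> seqs e" using u by (simp add: nrm_def)
  have "delta (u 0) \<in> Gcheck e" unfolding Gcheck_def
    by (rule zspan_gen) (use u in \<open>auto simp: nrm_def\<close>)
  moreover have "\<forall>i<0. delta (u i) = delta e" using u by (simp add: nrm_def)
  ultimately have "tens e (\<lambda>i. delta (u i)) \<in> {tens e x | x. adm e x \<and> x 0 \<in> Gcheck e \<and> (\<forall>i<0. x i = delta e)}"
    using delta_seqs_adm[OF us] by blast
  then have "delta u \<in> GcheckN e" unfolding GcheckN_def tens_delta[OF us] by (rule zspan_gen)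
  then have "(\<lambda>w. 0 * etens e w + delta u w) \<in> Hset e" by (rule Hset_intro)
  then show ?thesis by simp
qed

lemma DD_add: "DD (\<lambda>w. a w + b w) = (\<lambda>w. DD a w + DD b w)"
  by (simp add: DD_def shift_def algebra_simps)

lemma DD_smult: "DD (\<lambda>w. k * a w) = (\<lambda>w. k * DD a w)"
  by (simp add: DD_def shift_def algebra_simps)

lemma DD_diff: "DD (\<lambda>w. a w - b w) = (\<lambda>w. DD a w - DD b w)"
  by (simp add: DD_def shift_def algebra_simps)

lemma DD_zero: "DD (\<lambda>w. 0) = (\<lambda>w. 0)"
  by (simp add: DD_def shift_def)

lemma DD_delta: "DD (delta v) w = delta v w - delta (sh (-1) v) w"
proof -
  have "sh 1 w = v \<longleftrightarrow> w = sh (-1) v"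
    by (metis minus_minus sh_inv)
  then show ?thesis by (simp add: DD_def shift_sh delta_def)
qed

lemma delta_FS: "v \<in> seqs e \<Longrightarrow> delta v \<in> FS e"
proof -
  assume "v \<in> seqs e"
  moreover have "{w. delta v w \<noteq> 0} = {v}" by (auto simp: delta_def)
  ultimately show ?thesis by (auto simp: FS_def delta_def)
qed

lemma orbit_decomp:
  assumes u: "nrm e u"
  shows "\<exists>d. d \<in> FS e \<and> delta (sh n u) = (\<lambda>w. DD d w + delta u w)"
proof (induction n rule: int_induct[where k = 0])
  case base
  have "delta (sh 0 u) = (\<lambda>w. DD (\<lambda>w. 0) w + delta u w)" by (simp add: sh_0 DD_zero)
  with FS_zero show ?case by (intro exI[of _ "\<lambda>w. 0"] conjI)
next
  case (step1 i)
  then obtain d where d: "d \<in> FS e" "delta (sh i u) = (\<lambda>w. DD d w + delta u w)" by blast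
  let ?v = "sh (i + 1) u"
  have vs: "?v \<in> seqs e" using u sh_seqs by (auto simp: nrm_def)
  have sv: "sh (-1) ?v = sh i u" by (simp add: sh_sh)
  have d2: "delta (sh i u) w = DD d w + delta u w" for w using d(2) by (rule fun_cong)
  have "delta ?v = (\<lambda>w. DD (\<lambda>w. delta ?v w + d w) w + delta u w)"
  proof
    fix w
    have "delta ?v w = DD (delta ?v) w + delta (sh i u) w" using DD_delta[of ?v w] sv by simp
    also have "\<dots> = DD (delta ?v) w + DD d w + delta u w" using d2[of w] by simp
    finally show "delta ?v w = DD (\<lambda>w. delta ?v w + d w) w + delta u w" by (simp add: DD_add)
  qed
  moreover have "(\<lambda>w. delta ?v w + d w) \<in> FS e" using delta_FS[OF vs] d(1) by (rule FS_add)
  ultimately show ?case by (intro exI[of _ "\<lambda>w. delta ?v w + d w"] conjI)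
next
  case (step2 i)
  then obtain d where d: "d \<in> FS e" "delta (sh i u) = (\<lambda>w. DD d w + delta u w)" by blast
  let ?v = "sh i u"
  have vs: "?v \<in> seqs e" using u sh_seqs by (auto simp: nrm_def)
  have sv: "sh (-1) ?v = sh (i - 1) u" by (simp add: sh_sh)
  have d2: "delta (sh i u) w = DD d w + delta u w" for w using d(2) by (rule fun_cong)
  have "delta (sh (i - 1) u) = (\<lambda>w. DD (\<lambda>w. d w + (-1) * delta ?v w) w + delta u w)"
  proof
    fix w
    have "delta (sh (i - 1) u) w = delta ?v w - DD (delta ?v) w" using DD_delta[of ?v w] sv by simp
    also have "\<dots> = DD d w + delta u w - DD (delta ?v) w" using d2[of w] by simp
    finally show "delta (sh (i - 1) u) w = DD (\<lambda>w. d w + (-1) * delta ?v w) w + delta u w"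
      by (simp add: DD_add DD_smult DD_diff)
  qed
  moreover have "(\<lambda>w. d w + (-1) * delta ?v w) \<in> FS e"
    using d(1) FS_smult[OF delta_FS[OF vs]] by (rule FS_add)
  ultimately show ?case by (intro exI[of _ "\<lambda>w. d w + (-1) * delta ?v w"] conjI)
qed

lemma Rset_add: assumes "f \<in> Rset e" "g \<in> Rset e" shows "(\<lambda>w. f w + g w) \<in> Rset e"
proof -
  from assms(1) obtain d1 h1 where 1: "f = (\<lambda>w. DD d1 w + h1 w)" "d1 \<in> FS e" "h1 \<in> Hset e"
    unfolding Rset_def by blast
  from assms(2) obtain d2 h2 where 2: "g = (\<lambda>w. DD d2 w + h2 w)" "d2 \<in> FS e" "h2 \<in> Hset e"
    unfolding Rset_def by blast
  have eq: "(\<lambda>w. f w + g w) = (\<lambda>w. DD (\<lambda>w. d1 w + d2 w) w + (h1 w + h2 w))"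
    unfolding 1 2 DD_add by (simp add: algebra_simps)
  have m1: "(\<lambda>w. d1 w + d2 w) \<in> FS e" using 1 2 by (intro FS_add)
  have m2: "(\<lambda>w. h1 w + h2 w) \<in> Hset e" using 1 2 by (intro Hset_add)
  show ?thesis unfolding eq by (rule Rset_intro[OF m1 m2])
qed

lemma Rset_smult: assumes "f \<in> Rset e" shows "(\<lambda>w. k * f w) \<in> Rset e"
proof -
  from assms(1) obtain d1 h1 where 1: "f = (\<lambda>w. DD d1 w + h1 w)" "d1 \<in> FS e" "h1 \<in> Hset e"
    unfolding Rset_def by blast
  have eq: "(\<lambda>w. k * f w) = (\<lambda>w. DD (\<lambda>w. k * d1 w) w + k * h1 w)"
    unfolding 1 DD_smult by (simp add: algebra_simps)
  have m1: "(\<lambda>w. k * d1 w) \<in> FS e" using 1 by (intro FS_smult)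
  have m2: "(\<lambda>w. k * h1 w) \<in> Hset e" using 1 by (intro Hset_smult)
  show ?thesis unfolding eq by (rule Rset_intro[OF m1 m2])
qed

lemma Rset_zero: "(\<lambda>w. 0) \<in> Rset e"
proof -
  have "(\<lambda>w. DD (\<lambda>w. 0) w + 0) \<in> Rset e" by (rule Rset_intro[OF FS_zero Hset_zero])
  then show ?thesis by (simp add: DD_zero)
qed

lemma delta_Rset: assumes v: "v \<in> seqs e" shows "delta v \<in> Rset e"
proof (cases "v = (\<lambda>_. e)")
  case True
  have eq: "delta v = (\<lambda>w. DD (\<lambda>w. 0) w + etens e w)" using True by (simp add: DD_zero etens_delta)
  show ?thesis unfolding eq by (rule Rset_intro[OF FS_zero Hset_etens])
next
  case False
  then obtain u n where u: "nrm e u" "v = sh n u" using nrm_decomp[OF v False] by blast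
  then obtain d where d: "d \<in> FS e" "delta v = (\<lambda>w. DD d w + delta u w)"
    using orbit_decomp[OF u(1), of n] by blast
  show ?thesis unfolding d(2) by (rule Rset_intro[OF d(1) nrm_delta_Hset[OF u(1)]])
qed

lemma FS_Rset: assumes "c \<in> FS e" shows "c \<in> Rset e"
proof (rule zspan_induct[OF FS_zspan_delta[OF assms]])
  show "(\<lambda>x. 0) \<in> Rset e" by (rule Rset_zero)
next
  fix s k g assume sg: "s \<in> delta ` seqs e" "g \<in> Rset e"
  from sg(1) obtain v where v: "v \<in> seqs e" "s = delta v" by blast
  have "s \<in> Rset e" using delta_Rset[OF v(1)] v(2) by simp
  then have "(\<lambda>x. k * s x) \<in> Rset e" by (rule Rset_smult)
  then show "(\<lambda>x. k * s x + g x) \<in> Rset e" using sg(2) by (rule Rset_add)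
qed

theorem lemma3:
  fixes e :: 'e
  shows "{c \<in> TZ e. (\<forall>w. c w - shift c w = 0)} = range (\<lambda>k::int. (\<lambda>w. k * etens e w))
    \<and> {(\<lambda>w. d w + h w) | d h. d \<in> (\<lambda>c w. c w - shift c w) ` TZ e \<and> h \<in> Hset e} = TZ e
    \<and> (\<lambda>c w. c w - shift c w) ` TZ e \<inter> Hset e = {(\<lambda>w. 0)}"
proof (intro conjI)
  have Dl: "(\<lambda>c w. c w - shift c w) = DD" by (rule ext) (simp add: DD_def)
  show "{c \<in> TZ e. (\<forall>w. c w - shift c w = 0)} = range (\<lambda>k::int. (\<lambda>w. k * etens e w))"
  proof
    show "{c \<in> TZ e. (\<forall>w. c w - shift c w = 0)} \<subseteq> range (\<lambda>k::int. (\<lambda>w. k * etens e w))"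
    proof
      fix c assume "c \<in> {c \<in> TZ e. (\<forall>w. c w - shift c w = 0)}"
      then have "c \<in> FS e" "\<forall>w. c w - shift c w = 0" by (auto simp: TZ_FS)
      from ker_char[OF this] show "c \<in> range (\<lambda>k::int. (\<lambda>w. k * etens e w))"
        by (rule range_eqI)
    qed
  next
    show "range (\<lambda>k::int. (\<lambda>w. k * etens e w)) \<subseteq> {c \<in> TZ e. (\<forall>w. c w - shift c w = 0)}"
    proof
      fix c assume "c \<in> range (\<lambda>k::int. (\<lambda>w. k * etens e w))"
      then obtain k where c: "c = (\<lambda>w. k * etens e w)" by blast
      have "c \<in> TZ e" unfolding c TZ_FS by (intro FS_smult etens_FS)
      moreover have "etens e (sh 1 w) = etens e w" for w
        by (simp add: etens_delta delta_def sh_eq_const)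
      then have "\<forall>w. c w - shift c w = 0" by (simp add: c shift_sh)
      ultimately show "c \<in> {c \<in> TZ e. (\<forall>w. c w - shift c w = 0)}" by simp
    qed
  qed
  show "{(\<lambda>w. d w + h w) | d h. d \<in> (\<lambda>c w. c w - shift c w) ` TZ e \<and> h \<in> Hset e} = TZ e"
    unfolding Dl TZ_FS
  proof
    show "{(\<lambda>w. d w + h w) | d h. d \<in> DD ` FS e \<and> h \<in> Hset e} \<subseteq> FS e"
    proof
      fix c assume "c \<in> {(\<lambda>w. d w + h w) | d h. d \<in> DD ` FS e \<and> h \<in> Hset e}"
      then obtain d h where dh: "c = (\<lambda>w. d w + h w)" "d \<in> DD ` FS e" "h \<in> Hset e" by blast
      from dh(2) obtain d0 where "d0 \<in> FS e" "d = DD d0" by blast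
      then have "d \<in> FS e" using DD_FS by simp
      then show "c \<in> FS e" unfolding dh(1) by (rule FS_add) (rule Hset_FS[OF dh(3)])
    qed
  next
    show "FS e \<subseteq> {(\<lambda>w. d w + h w) | d h. d \<in> DD ` FS e \<and> h \<in> Hset e}"
    proof
      fix c assume "c \<in> FS e"
      then have "c \<in> Rset e" by (rule FS_Rset)
      then obtain d h where dh: "c = (\<lambda>w. DD d w + h w)" "d \<in> FS e" "h \<in> Hset e"
        unfolding Rset_def by blast
      have "DD d \<in> DD ` FS e" using dh(2) by (rule imageI)
      then show "c \<in> {(\<lambda>w. d w + h w) | d h. d \<in> DD ` FS e \<and> h \<in> Hset e}"
        using dh by (intro CollectI exI[of _ "DD d"] exI[of _ h] conjI) simp_all
    qed
  qed
  show "(\<lambda>c w. c w - shift c w) ` TZ e \<inter> Hset e = {(\<lambda>w. 0)}"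
    unfolding Dl TZ_FS
  proof
    show "DD ` FS e \<inter> Hset e \<subseteq> {(\<lambda>w. 0)}"
    proof
      fix f assume "f \<in> DD ` FS e \<inter> Hset e"
      then obtain d where d: "d \<in> FS e" "f = DD d" "DD d \<in> Hset e" by blast
      from part3[OF d(1) d(3)] d(2) show "f \<in> {(\<lambda>w. 0)}" by simp
    qed
  next
    have "DD (\<lambda>w. 0) \<in> DD ` FS e" using FS_zero by (rule imageI)
    then have "(\<lambda>w. 0) \<in> DD ` FS e" by (simp only: DD_zero)
    then show "{(\<lambda>w. 0)} \<subseteq> DD ` FS e \<inter> Hset e" using Hset_zero by simp
  qed
qed

end
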